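(* For every $\alpha\in(0,\pi/2)$, the competitive ratio of the Straight-Up algorithm is $$\rho(\textsc{Straight-Up};\alpha)=\begin{cases}2\cos\alpha & \text{if } \alpha\le \pi/4,\\ 1/\sin\alpha & \text{otherwise.}\end{cases}$$
   Context: Online drone coverage on a line. A drone has a fixed half angle-of-view $\alpha\in(0,\pi/2)$. A drone at a point $T=(t_x,t_y)$ with $t_y\ge 0$ covers the segment $[t_x-t_y\tan\alpha,\ t_x+t_y\tan\alpha]$ of the $x$-axis. For a point $X=(x,0)$ its feasibility cone is $\mathrm{FC}(X)=\{(u,v): v\ge 0,\ |u-x|\le v\tan\alpha\}$, and the feasibility cone of a finite set of points on the $x$-axis is the intersection of their cones. An input is a sequence of points $X_0=(0,0),X_1,\dots,X_n$ ($n\ge1$) on the $x$-axis, $X_i=(x_i,0)$, revealed one at a time. A solution is a sequence of drone positions $P_0=(0,0),P_1,\dots,P_n$ with $P_i\in \mathrm{FC}(X_0,\dots,X_i)$; its cost is $\sum_{i=0}^{n-1}|P_iP_{i+1}|$ (Euclidean). An online algorithm chooses $P_i$ knowing only $X_0,\dots,X_i$. $\mathrm{OPT}(\mathbf X;\alpha)$ is the minimum cost of a solution when the whole input is known in advance. A request $X_{i+1}$ is redundant if $x_{i+1}\in[\min_{j\le i}x_j,\max_{j\le i}x_j]$. An input is good if it has no redundant requests and is scaled (and possibly reflected) so that $\min_j x_j=-1$ and $r:=\max_j x_j\in[0,1]$. The competitive ratio $\rho(\mathrm{ALG};\alpha)$ is the supremum over good inputs of $\mathrm{ALG}(\mathbf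 X;\alpha)/\mathrm{OPT}(\mathbf X;\alpha)$. The Straight-Up algorithm keeps the drone on the $y$-axis: $P_i$ is the lowest point of the $y$-axis lying in $\mathrm{FC}(X_0,\dots,X_i)$. *)

theory Defs
  imports "HOL-Analysis.Analysis"
begin

text \<open>Points of the plane are pairs (u,v) :: real \<times> real; the library metric on
  real \<times> real is the Euclidean one. An input is given by n and the sequence
  xs :: nat \<Rightarrow> real, with X_i = (xs i, 0) for i \<le> n (values beyond n are irrelevant).\<close>

definition FC :: "real \<Rightarrow> real \<Rightarrow> (real \<times> real) set" where
  "FC \<alpha> x = {(u, v). v \<ge> 0 \<and> \<bar>u - x\<bar> \<le> v * tan \<alpha>}"

definition FC_upto :: "real \<Rightarrow> (nat \<Rightarrow> real) \<Rightarrow> nat \<Rightarrow> (real \<times> real) set" where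
  "FC_upto \<alpha> xs i = (\<Inter>j\<in>{0..i}. FC \<alpha> (xs j))"

definition is_solution :: "real \<Rightarrow> nat \<Rightarrow> (nat \<Rightarrow> real) \<Rightarrow> (nat \<Rightarrow> real \<times> real) \<Rightarrow> bool" where
  "is_solution \<alpha> n xs P \<longleftrightarrow> P 0 = (0, 0) \<and> (\<forall>i\<le>n. P i \<in> FC_upto \<alpha> xs i)"

definition cost :: "nat \<Rightarrow> (nat \<Rightarrow> real \<times> real) \<Rightarrow> real" where
  "cost n P = (\<Sum>i<n. dist (P i) (P (Suc i)))"

definition OPT :: "real \<Rightarrow> nat \<Rightarrow> (nat \<Rightarrow> real) \<Rightarrow> real" where
  "OPT \<alpha> n xs = Inf {cost n P | P. is_solution \<alpha> n xs P}"

definition straight_up_pos :: "real \<Rightarrow> (nat \<Rightarrow> real) \<Rightarrow> nat \<Rightarrow> real \<times> real" where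
  "straight_up_pos \<alpha> xs i = (0, Inf {v. (0, v) \<in> FC_upto \<alpha> xs i})"

definition straight_up_cost :: "real \<Rightarrow> nat \<Rightarrow> (nat \<Rightarrow> real) \<Rightarrow> real" where
  "straight_up_cost \<alpha> n xs = cost n (straight_up_pos \<alpha> xs)"

definition redundant :: "(nat \<Rightarrow> real) \<Rightarrow> nat \<Rightarrow> bool" where
  "redundant xs i \<longleftrightarrow> xs (Suc i) \<in> {Min (xs ` {0..i}) .. Max (xs ` {0..i})}"

definition good_input :: "nat \<Rightarrow> (nat \<Rightarrow> real) \<Rightarrow> bool" where
  "good_input n xs \<longleftrightarrow> n \<ge> 1 \<and> xs 0 = 0 \<and> (\<forall>i<n. \<not> redundant xs i)
     \<and> Min (xs ` {0..n}) = -1 \<and> Max (xs ` {0..n}) \<in> {0..1}"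

definition rho_straight_up :: "real \<Rightarrow> ereal" where
  "rho_straight_up \<alpha> = (SUP (n, xs) \<in> {(n, xs). good_input n xs}.
      ereal (straight_up_cost \<alpha> n xs / OPT \<alpha> n xs))"

end

theory Submission
  imports Defs
begin

lemma alg1:
  fixes t u v :: real
  assumes t: "0 < t" "t \<le> 1" and v: "0 \<le> v" and h1: "\<bar>u\<bar> \<le> v * t" and h2: "\<bar>u + 1\<bar> \<le> v * t"
  shows "u\<^sup>2 + v\<^sup>2 \<ge> 1/4 + 1/(4*t\<^sup>2)"
proof -
  define w where "w = v * t"
  have w: "w \<ge> 1/2 + \<bar>u + 1/2\<bar>" using h1 h2 unfolding w_def by linarith
  have w0: "0 \<le> 1/2 + \<bar>u + 1/2\<bar>" by simp
  have w2: "w\<^sup>2 \<ge> (1/2 + \<bar>u + 1/2\<bar>)\<^sup>2" using w w0 by (simp add: power_mono)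
  have sq: "(1/2 + \<bar>u + 1/2\<bar>)\<^sup>2 = 1/4 + (\<bar>u + 1/2\<bar> + (u+1/2)\<^sup>2)"
    by (simp add: power2_eq_square algebra_simps)
  have nn: "0 \<le> \<bar>u + 1/2\<bar> + (u+1/2)\<^sup>2" by simp
  have it: "1 \<le> 1/t\<^sup>2" using t by (simp add: power_le_one field_simps)
  have "v\<^sup>2 = w\<^sup>2 / t\<^sup>2" using t unfolding w_def by (simp add: power_mult_distrib)
  also have "\<dots> \<ge> (1/4 + (\<bar>u + 1/2\<bar> + (u+1/2)\<^sup>2)) / t\<^sup>2"
    using w2 sq t by (simp add: divide_right_mono)
  finally have "v\<^sup>2 \<ge> 1/(4*t\<^sup>2) + (\<bar>u + 1/2\<bar> + (u+1/2)\<^sup>2) * (1/t\<^sup>2)"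
    by (simp add: add_divide_distrib)
  moreover have "(\<bar>u + 1/2\<bar> + (u+1/2)\<^sup>2) * (1/t\<^sup>2) \<ge> \<bar>u + 1/2\<bar> + (u+1/2)\<^sup>2"
    using mult_left_mono[OF it nn] by simp
  moreover have "u\<^sup>2 + \<bar>u + 1/2\<bar> + (u+1/2)\<^sup>2 \<ge> 1/4"
  proof (cases "u \<ge> -1/2")
    case True
    have "u\<^sup>2 + \<bar>u + 1/2\<bar> + (u+1/2)\<^sup>2 - 1/4 = 2*(u+1/2)\<^sup>2" using True
      by (simp add: power2_eq_square algebra_simps)
    then show ?thesis by (smt (verit) zero_le_power2)
  next
    case False
    have "(1/2)*(1/2) \<le> (-u)*(-u)" by (rule mult_mono) (use False in auto)
    then have "u\<^sup>2 \<ge> 1/4" by (simp add: power2_eq_square)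
    moreover have "0 \<le> (u+1/2)\<^sup>2" by simp
    moreover have "0 \<le> \<bar>u + 1/2\<bar>" by simp
    ultimately show ?thesis by linarith
  qed
  ultimately show ?thesis by linarith
qed

lemma alg2:
  fixes t u v :: real
  assumes t: "0 < t" and h2: "\<bar>u + 1\<bar> \<le> v * t"
  shows "u\<^sup>2 + v\<^sup>2 \<ge> 1/(1+t\<^sup>2)"
proof -
  have a: "1 \<le> v * t - u" using h2 by linarith
  have "(v * t - u)\<^sup>2 \<le> (1+t\<^sup>2)*(u\<^sup>2+v\<^sup>2)"
  proof -
    have "(1+t\<^sup>2)*(u\<^sup>2+v\<^sup>2) - (v * t - u)\<^sup>2 = (u * t + v)\<^sup>2" by (simp add: power2_eq_square algebra_simps)
    then show ?thesis by (smt (verit) zero_le_power2)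
  qed
  moreover have "1 \<le> (v * t - u)\<^sup>2" using a by (smt (verit) one_le_power)
  ultimately have "1 \<le> (1+t\<^sup>2)*(u\<^sup>2+v\<^sup>2)" by linarith
  moreover have "0 < 1 + t\<^sup>2" by (simp add: add_pos_nonneg)
  ultimately show ?thesis by (simp add: pos_divide_le_eq mult.commute)
qed

definition Dv :: "real \<Rightarrow> real" where
  "Dv \<alpha> = (if \<alpha> \<le> pi/4 then 1/(2 * sin \<alpha>) else cos \<alpha>)"

lemma trig_basic:
  assumes "0 < \<alpha>" "\<alpha> < pi/2"
  shows "sin \<alpha> > 0" "cos \<alpha> > 0" "tan \<alpha> > 0"
  using assms by (auto intro!: sin_gt_zero cos_gt_zero tan_gt_zero)

lemma geo:
  assumes a: "0 < \<alpha>" "\<alpha> < pi/2" and v: "0 \<le> v"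
    and h1: "\<bar>u\<bar> \<le> v * tan \<alpha>" and h2: "\<bar>u + 1\<bar> \<le> v * tan \<alpha>"
  shows "Dv \<alpha> \<le> sqrt (u\<^sup>2 + v\<^sup>2)"
proof -
  note tb = trig_basic[OF a]
  have sc: "sin \<alpha> ^ 2 + cos \<alpha> ^ 2 = 1" by simp
  show ?thesis
  proof (cases "\<alpha> \<le> pi/4")
    case True
    have "tan \<alpha> \<le> tan (pi/4)" using True a by (intro tan_mono_le) auto
    then have t1: "tan \<alpha> \<le> 1" by (simp add: tan_45)
    have "u\<^sup>2 + v\<^sup>2 \<ge> 1/4 + 1/(4*(tan \<alpha>)\<^sup>2)" using alg1[OF tb(3) t1 v h1 h2] .
    moreover have "1/4 + 1/(4*(tan \<alpha>)\<^sup>2) = (1/(2 * sin \<alpha>))\<^sup>2"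
      using tb sc unfolding tan_def by (simp add: field_simps power2_eq_square)
    ultimately show ?thesis using True unfolding Dv_def by (simp add: real_le_rsqrt)
  next
    case False
    have "u\<^sup>2 + v\<^sup>2 \<ge> 1/(1 + (tan \<alpha>)\<^sup>2)" using alg2[OF tb(3) h2] .
    moreover have "1/(1 + (tan \<alpha>)\<^sup>2) = (cos \<alpha>)\<^sup>2"
      using tb sc unfolding tan_def by (simp add: field_simps power2_eq_square)
    ultimately show ?thesis using False unfolding Dv_def by (simp add: real_le_rsqrt)
  qed
qed

lemma Dv_pos: "0 < \<alpha> \<Longrightarrow> \<alpha> < pi/2 \<Longrightarrow> Dv \<alpha> > 0"
  using trig_basic unfolding Dv_def by auto

lemma su_pos:
  assumes a: "0 < \<alpha>" "\<alpha> < pi/2"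
  shows "straight_up_pos \<alpha> xs i = (0, Max ((\<lambda>j. \<bar>xs j\<bar>) ` {0..i}) / tan \<alpha>)"
proof -
  define M where "M = Max ((\<lambda>j. \<bar>xs j\<bar>) ` {0..i})"
  have t: "tan \<alpha> > 0" using trig_basic[OF a] by simp
  have M0: "M \<ge> 0" unfolding M_def by (rule order.trans[OF _ Max_ge[of _ "\<bar>xs 0\<bar>"]]) auto
  have "{v. (0, v) \<in> FC_upto \<alpha> xs i} = {M / tan \<alpha> ..}"
  proof (intro set_eqI iffI)
    fix v assume "v \<in> {v. (0, v) \<in> FC_upto \<alpha> xs i}"
    then have h: "\<forall>j\<in>{0..i}. v \<ge> 0 \<and> \<bar>xs j\<bar> \<le> v * tan \<alpha>"
      unfolding FC_upto_def FC_def by auto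
    then have "M \<le> v * tan \<alpha>" unfolding M_def by (subst Max_le_iff) auto
    then show "v \<in> {M / tan \<alpha> ..}" using t by (simp add: pos_divide_le_eq)
  next
    fix v assume "v \<in> {M / tan \<alpha> ..}"
    then have "M \<le> v * tan \<alpha>" using t by (simp add: pos_divide_le_eq)
    moreover have "v \<ge> 0" using \<open>v \<in> {M / tan \<alpha> ..}\<close> M0 t
      by (metis atLeast_iff divide_nonneg_pos order.trans)
    moreover have "\<forall>j\<in>{0..i}. \<bar>xs j\<bar> \<le> M" unfolding M_def by auto
    ultimately show "v \<in> {v. (0, v) \<in> FC_upto \<alpha> xs i}"
      unfolding FC_upto_def FC_def by force
  qed
  then show ?thesis unfolding straight_up_pos_def M_def by simp
qed

lemma cost_su:
  assumes a: "0 < \<alpha>" "\<alpha> < pi/2"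
  shows "straight_up_cost \<alpha> n xs =
    (Max ((\<lambda>j. \<bar>xs j\<bar>) ` {0..n}) - \<bar>xs 0\<bar>) / tan \<alpha>"
proof -
  define M where "M i = Max ((\<lambda>j. \<bar>xs j\<bar>) ` {0..i})" for i
  have t: "tan \<alpha> > 0" using trig_basic[OF a] by simp
  have mono: "M i \<le> M (Suc i)" for i unfolding M_def by (rule Max_mono) auto
  have "straight_up_cost \<alpha> n xs = (\<Sum>i<n. (M (Suc i) - M i) / tan \<alpha>)"
    unfolding straight_up_cost_def cost_def
  proof (intro sum.cong refl)
    fix x
    have "dist (M x / tan \<alpha>) (M (Suc x) / tan \<alpha>) = \<bar>M x - M (Suc x)\<bar> / \<bar>tan \<alpha>\<bar>"
      by (simp add: dist_real_def diff_divide_distrib[symmetric] abs_divide)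
    also have "\<dots> = (M (Suc x) - M x) / tan \<alpha>" using mono[of x] t by simp
    finally show "dist (straight_up_pos \<alpha> xs x) (straight_up_pos \<alpha> xs (Suc x)) = (M (Suc x) - M x) / tan \<alpha>"
      using t unfolding su_pos[OF a] M_def by (simp add: dist_Pair_Pair)
  qed
  also have "\<dots> = (M n - M 0) / tan \<alpha>"
    by (simp add: sum_divide_distrib[symmetric] sum_lessThan_telescope)
  finally show ?thesis by (simp add: M_def)
qed


lemma good_facts:
  assumes g: "good_input n xs"
  shows "Max ((\<lambda>j. \<bar>xs j\<bar>) ` {0..n}) = 1" "xs 0 = 0" "\<exists>j\<le>n. xs j = -1"
proof -
  have mn: "Min (xs ` {0..n}) = -1" and mx: "Max (xs ` {0..n}) \<in> {0..1}" and x0: "xs 0 = 0"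
    using g unfolding good_input_def by auto
  have "Min (xs ` {0..n}) \<in> xs ` {0..n}" by (rule Min_in) auto
  then obtain j where j: "j \<le> n" "xs j = -1" using mn by auto
  have b: "\<bar>xs i\<bar> \<le> 1" if "i \<le> n" for i
  proof -
    have "Min (xs ` {0..n}) \<le> xs i" "xs i \<le> Max (xs ` {0..n})" using that by auto
    moreover have "Max (xs ` {0..n}) \<le> 1" using mx by simp
    ultimately show ?thesis unfolding abs_le_iff using mn by linarith
  qed
  show "Max ((\<lambda>j. \<bar>xs j\<bar>) ` {0..n}) = 1"
  proof (rule Max_eqI)
    show "1 \<in> (\<lambda>j. \<bar>xs j\<bar>) ` {0..n}" using j by (intro image_eqI[of _ _ j]) auto
  qed (use b in auto)
  show "xs 0 = 0" by (rule x0)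
  show "\<exists>j\<le>n. xs j = -1" using j by auto
qed

lemma chain: "dist (P 0) (P n) \<le> cost n P"
proof (induction n)
  case 0 then show ?case by (simp add: cost_def)
next
  case (Suc n)
  have "dist (P 0) (P (Suc n)) \<le> dist (P 0) (P n) + dist (P n) (P (Suc n))" by (rule dist_triangle)
  then show ?case using Suc by (simp add: cost_def)
qed

lemma su_solution:
  assumes a: "0 < \<alpha>" "\<alpha> < pi/2" and x0: "xs 0 = 0"
  shows "is_solution \<alpha> n xs (straight_up_pos \<alpha> xs)"
proof -
  have t: "tan \<alpha> > 0" using trig_basic[OF a] by simp
  have "straight_up_pos \<alpha> xs i \<in> FC_upto \<alpha> xs i" for i
  proof -
    define M where "M = Max ((\<lambda>j. \<bar>xs j\<bar>) ` {0..i})"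
    have le: "\<bar>xs j\<bar> \<le> M" if "j \<le> i" for j unfolding M_def using that by auto
    have M0: "M \<ge> 0" using le[of 0] by simp
    have "(0, M / tan \<alpha>) \<in> FC_upto \<alpha> xs i"
      unfolding FC_upto_def FC_def using le M0 t by auto
    then show ?thesis unfolding su_pos[OF a] M_def .
  qed
  moreover have "straight_up_pos \<alpha> xs 0 = (0, 0)" unfolding su_pos[OF a] using x0 by simp
  ultimately show ?thesis unfolding is_solution_def by auto
qed

lemma OPT_lower:
  assumes a: "0 < \<alpha>" "\<alpha> < pi/2" and g: "good_input n xs"
  shows "{cost n P | P. is_solution \<alpha> n xs P} \<noteq> {}"
    "\<forall>c\<in>{cost n P | P. is_solution \<alpha> n xs P}. Dv \<alpha> \<le> c"
    "Dv \<alpha> \<le> OPT \<alpha> n xs"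
proof -
  show ne: "{cost n P | P. is_solution \<alpha> n xs P} \<noteq> {}"
    using su_solution[of \<alpha> xs n] a good_facts(2)[OF g] by blast
  obtain j where j: "j \<le> n" "xs j = -1" using good_facts(3)[OF g] by blast
  have x0: "xs 0 = 0" using good_facts(2)[OF g] .
  show lb: "\<forall>c\<in>{cost n P | P. is_solution \<alpha> n xs P}. Dv \<alpha> \<le> c"
  proof
    fix c assume "c \<in> {cost n P | P. is_solution \<alpha> n xs P}"
    then obtain P where c: "c = cost n P" and s: "is_solution \<alpha> n xs P" by blast
    obtain u v where uv: "P n = (u, v)" by fastforce
    have P0: "P 0 = (0,0)" and Pn: "P n \<in> FC_upto \<alpha> xs n" using s unfolding is_solution_def by auto
    have "P n \<in> FC \<alpha> (xs 0)" "P n \<in> FC \<alpha> (xs j)" using Pn j(1) unfolding FC_upto_def by auto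
    then have "v \<ge> 0" "\<bar>u\<bar> \<le> v * tan \<alpha>" "\<bar>u + 1\<bar> \<le> v * tan \<alpha>"
      using x0 j uv unfolding FC_def by auto
    then have "Dv \<alpha> \<le> sqrt (u\<^sup>2 + v\<^sup>2)" by (rule geo[OF a])
    also have "\<dots> = dist (P 0) (P n)" using P0 uv by (simp add: dist_Pair_Pair dist_real_def)
    also have "\<dots> \<le> c" using chain c by simp
    finally show "Dv \<alpha> \<le> c" .
  qed
  show "Dv \<alpha> \<le> OPT \<alpha> n xs" unfolding OPT_def using ne lb by (intro cInf_greatest) auto
qed


definition wxs :: "nat \<Rightarrow> real" where "wxs i = (if i = 0 then 0 else -1)"

lemma wxs_img: "wxs ` {0..1} = {0, -1}"
proof -
  have "{0..1::nat} = {0, 1}" by auto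
  then show ?thesis by (auto simp: wxs_def)
qed

lemma wxs_good: "good_input 1 wxs"
  unfolding good_input_def redundant_def using wxs_img by (simp add: wxs_def)

lemma ring_id: "(- (c::real)\<^sup>2)\<^sup>2 + (s * c)\<^sup>2 = c\<^sup>2 * (s\<^sup>2 + c\<^sup>2)"
  by (simp add: power2_eq_square algebra_simps)

lemma wxs_OPT:
  assumes a: "0 < \<alpha>" "\<alpha> < pi/2"
  shows "OPT \<alpha> 1 wxs = Dv \<alpha>"
proof -
  note tb = trig_basic[OF a]
  have sc: "sin \<alpha> ^ 2 + cos \<alpha> ^ 2 = 1" by simp
  obtain q where q: "q \<in> FC \<alpha> 0" "q \<in> FC \<alpha> (-1)" "dist (0,0) q = Dv \<alpha>"
  proof (cases "\<alpha> \<le> pi/4")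
    case True
    define q where "q = (-1/2 :: real, 1 / (2 * tan \<alpha>))"
    have "q \<in> FC \<alpha> 0" "q \<in> FC \<alpha> (-1)" unfolding q_def FC_def using tb by auto
    moreover have "dist (0,0) q = Dv \<alpha>"
    proof -
      have "dist (0,0) q = sqrt (1/4 + 1/(4*(tan \<alpha>)\<^sup>2))" unfolding q_def
        by (simp add: dist_Pair_Pair dist_real_def power2_eq_square)
      also have "1/4 + 1/(4*(tan \<alpha>)\<^sup>2) = (1/(2 * sin \<alpha>))\<^sup>2"
        using tb sc unfolding tan_def by (simp add: field_simps power2_eq_square)
      finally show ?thesis using True tb unfolding Dv_def by simp
    qed
    ultimately show ?thesis using that by blast
  next
    case False
    have "tan (pi/4) < tan \<alpha>" using False a by (intro tan_monotone) auto
    then have "1 < tan \<alpha>" by (simp only: tan_45)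
    then have "1 < sin \<alpha> / cos \<alpha>" by (simp add: tan_def)
    then have cs: "cos \<alpha> < sin \<alpha>" using tb by (simp add: field_simps)
    define q where "q = (- (cos \<alpha>)\<^sup>2, sin \<alpha> * cos \<alpha>)"
    have "\<bar>- (cos \<alpha>)\<^sup>2\<bar> \<le> sin \<alpha> * cos \<alpha> * tan \<alpha>"
    proof -
      have "sin \<alpha> * cos \<alpha> * tan \<alpha> = (sin \<alpha>)\<^sup>2" using tb unfolding tan_def by (simp add: power2_eq_square)
      moreover have "(cos \<alpha>)\<^sup>2 \<le> (sin \<alpha>)\<^sup>2" using cs tb by (intro power_mono) auto
      ultimately show ?thesis by simp
    qed
    moreover have "\<bar>- (cos \<alpha>)\<^sup>2 + 1\<bar> \<le> sin \<alpha> * cos \<alpha> * tan \<alpha>"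
    proof -
      have "sin \<alpha> * cos \<alpha> * tan \<alpha> = (sin \<alpha>)\<^sup>2" using tb unfolding tan_def by (simp add: power2_eq_square)
      moreover have "- (cos \<alpha>)\<^sup>2 + 1 = (sin \<alpha>)\<^sup>2" using sc by linarith
      ultimately show ?thesis by simp
    qed
    ultimately have "q \<in> FC \<alpha> 0" "q \<in> FC \<alpha> (-1)" unfolding q_def FC_def using tb by auto
    moreover have "dist (0,0) q = Dv \<alpha>"
    proof -
      have e1: "(- (cos \<alpha>)\<^sup>2)\<^sup>2 + (sin \<alpha> * cos \<alpha>)\<^sup>2 = (cos \<alpha>)\<^sup>2 * ((sin \<alpha>)\<^sup>2 + (cos \<alpha>)\<^sup>2)"
        using ring_id[of "cos \<alpha>" "sin \<alpha>"] .
      have "dist (0,0) q = sqrt ((- (cos \<alpha>)\<^sup>2)\<^sup>2 + (sin \<alpha> * cos \<alpha>)\<^sup>2)" unfolding q_def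
        by (simp add: dist_Pair_Pair dist_real_def)
      also have "\<dots> = sqrt ((cos \<alpha>)\<^sup>2)" unfolding e1 sc by simp
      also have "\<dots> = cos \<alpha>" using tb by simp
      finally show ?thesis using False unfolding Dv_def by simp
    qed
    ultimately show ?thesis using that by blast
  qed
  define Q where "Q i = (if i = 0 then (0,0) else q)" for i :: nat
  have "is_solution \<alpha> 1 wxs Q"
    unfolding is_solution_def FC_upto_def
  proof (intro conjI allI impI)
    show "Q 0 = (0,0)" by (simp add: Q_def)
    fix i :: nat assume "i \<le> 1"
    then have "i = 0 \<or> i = 1" by auto
    then show "Q i \<in> (\<Inter>j\<in>{0..i}. FC \<alpha> (wxs j))"
    proof
      assume "i = 0" then show ?thesis using tb by (simp add: Q_def wxs_def FC_def)
    next
      assume i: "i = 1"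
      have "{0..i} = {0, 1}" using i by auto
      then show ?thesis using q i by (simp add: Q_def wxs_def)
    qed
  qed
  then have mem: "cost 1 Q \<in> {cost 1 P | P. is_solution \<alpha> 1 wxs P}" by blast
  have cQ: "cost 1 Q = Dv \<alpha>" using q by (simp add: cost_def Q_def)
  have bb: "bdd_below {cost 1 P | P. is_solution \<alpha> 1 wxs P}"
    using OPT_lower(2)[OF a wxs_good] by (intro bdd_belowI[of _ "Dv \<alpha>"]) blast
  have "OPT \<alpha> 1 wxs \<le> Dv \<alpha>" unfolding OPT_def
    using cInf_lower[OF mem bb] cQ by simp
  then show ?thesis using OPT_lower(3)[OF a wxs_good] by simp
qed

theorem theorem1:
  fixes \<alpha> :: real
  assumes "0 < \<alpha>" and "\<alpha> < pi / 2"
  shows "rho_straight_up \<alpha> = ereal (if \<alpha> \<le> pi / 4 then 2 * cos \<alpha> else 1 / sin \<alpha>)"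
proof -
  have a: "0 < \<alpha>" "\<alpha> < pi/2" using assms by auto
  note tb = trig_basic[OF a]
  have D0: "Dv \<alpha> > 0" by (rule Dv_pos[OF a])
  define R where "R = (1 / tan \<alpha>) / Dv \<alpha>"
  have R: "R = (if \<alpha> \<le> pi / 4 then 2 * cos \<alpha> else 1 / sin \<alpha>)"
    unfolding R_def Dv_def tan_def using tb by (auto simp: field_simps)
  have sc: "straight_up_cost \<alpha> n xs = 1 / tan \<alpha>" if g: "good_input n xs" for n xs
    using cost_su[OF a, of n xs] good_facts[OF g] by simp
  have le: "straight_up_cost \<alpha> n xs / OPT \<alpha> n xs \<le> R" if g: "good_input n xs" for n xs
    unfolding sc[OF g] R_def using OPT_lower(3)[OF a g] D0 tb
    by (intro divide_left_mono) auto
  have eq: "straight_up_cost \<alpha> 1 wxs / OPT \<alpha> 1 wxs = R"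
    unfolding sc[OF wxs_good] wxs_OPT[OF a] R_def ..
  have "rho_straight_up \<alpha> = ereal R"
    unfolding rho_straight_up_def
  proof (rule antisym)
    show "(SUP (n, xs) \<in> {(n, xs). good_input n xs}. ereal (straight_up_cost \<alpha> n xs / OPT \<alpha> n xs)) \<le> ereal R"
      by (rule SUP_least) (use le in auto)
    show "ereal R \<le> (SUP (n, xs) \<in> {(n, xs). good_input n xs}. ereal (straight_up_cost \<alpha> n xs / OPT \<alpha> n xs))"
      by (rule SUP_upper2[of "(1, wxs)"]) (use wxs_good eq in auto)
  qed
  then show ?thesis using R by simp
qed

end
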